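(* A standard playable enriched $Ł_n$-frame $\mathfrak F$ is truly playable if and only if the formula $[\varnothing]\phi\leftrightarrow[\mathcal O]\phi$ is valid in $\mathfrak F$ for every $\phi\in\mathsf{Form}_{\mathcal L^+}$.
   Context: $Ł_n=\{0,\frac1n,\dots,1\}$ with $\neg x=1-x$, $x\oplus y=\min(x+y,1)$, $x\odot y=\max(x+y-1,0)$, $x\to y=\min(1,1-x+y)$, $\wedge=\min$, applied pointwise; $0,1$ also constant functions; $\chi_Y$ is the characteristic function of $Y$. $N$ finite set of players, $|N|\ge2$. An $Ł_n$-valued effectivity function on a set $S$ is $E:\mathcal P N\times Ł_n^S\to Ł_n$. It is: outcome monotonic if $f\ge g$ implies $E(C,f)\ge E(C,g)$; $N$-maximal if $\neg E(\varnothing,\neg f)\le E(N,f)$; superadditive if $E(C_1,f)\wedge E(C_2,g)\le E(C_1\cup C_2,f\wedge g)$ whenever $C_1\cap C_2=\varnothing$; homogeneous if $E(C,f\oplus f)=E(C,f)\oplus E(C,f)$ and $E(C,f\odot f)=E(C,f)\odot E(C,f)$; has liveness if $E(C,1)=1$; has safety if $E(C,0)=0$; principal if there is $g$ with $\{f\mid E(\varnothing,f)=1\}=\{f\mid f\ge g\odot\cdots\odot g\ (n\text{ factors})\}$. Playable: first six; truly playable: playable and principal. Formulas of $\mathcal L^+$: $\phi::=1\mid p\mid\phi\to\phi\mid\neg\phi\mid[C]\phi\mid[\mathcal O]\phi$ ($p$ in a countably infinite set $\mathsf{Prop}$, $C\subseteq N$); $\phi\leftrightarrow\psi=(\phi\to\psi)\odot(\psi\to\phi)$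 with $\phi\odot\psi=\neg(\phi\to\neg\psi)$. An enriched $Ł_n$-frame is $(S,E,R)$ with $S\ne\varnothing$, $E(u)$ an $Ł_n$-valued effectivity function on $S$ for each $u\in S$, and $R\subseteq S\times S$; it is standard if $R=\{(u,v)\mid E(u)(\varnothing,\neg\chi_{\{v\}})=0\}$, and (truly) playable if every $E(u)$ is. A model on it adds $\mathrm{Val}:S\times\mathsf{Prop}\to Ł_n$ extended by the Łukasiewicz operations on $1,\neg,\to$, $\mathrm{Val}(u,[C]\phi)=E(u)(C,\mathrm{Val}(-,\phi))$ and $\mathrm{Val}(u,[\mathcal O]\phi)=\min\{\mathrm{Val}(v,\phi)\mid(u,v)\in R\}$ (minimum of the empty set being $1$). A formula is valid in a frame if its value is $1$ at every state of every model based on the frame. *)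

theory Defs
  imports Main "HOL-Library.Indicator_Function"
begin

definition Ln :: "nat \<Rightarrow> real set" where
  "Ln n = {real k / real n | k. k \<le> n}"

definition lval :: "nat \<Rightarrow> ('s \<Rightarrow> real) \<Rightarrow> bool" where
  "lval n f \<longleftrightarrow> (\<forall>s. f s \<in> Ln n)"

definition loplus :: "real \<Rightarrow> real \<Rightarrow> real" where
  "loplus x y = min (x + y) 1"

definition lodot :: "real \<Rightarrow> real \<Rightarrow> real" where
  "lodot x y = max (x + y - 1) 0"

definition limp :: "real \<Rightarrow> real \<Rightarrow> real" where
  "limp x y = min 1 (1 - x + y)"

fun lpow :: "nat \<Rightarrow> ('s \<Rightarrow> real) \<Rightarrow> ('s \<Rightarrow> real)" where
  "lpow 0 g = (\<lambda>s. 1)"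
| "lpow (Suc k) g = (\<lambda>s. lodot (g s) (lpow k g s))"

type_synonym ('a, 's) eff = "'a set \<Rightarrow> ('s \<Rightarrow> real) \<Rightarrow> real"

definition eff_fun :: "nat \<Rightarrow> ('a, 's) eff \<Rightarrow> bool" where
  "eff_fun n E \<longleftrightarrow> (\<forall>C f. lval n f \<longrightarrow> E C f \<in> Ln n)"

definition outcome_monotonic :: "nat \<Rightarrow> ('a, 's) eff \<Rightarrow> bool" where
  "outcome_monotonic n E \<longleftrightarrow>
     (\<forall>C f g. lval n f \<longrightarrow> lval n g \<longrightarrow> (\<forall>s. g s \<le> f s) \<longrightarrow> E C g \<le> E C f)"

definition N_maximal :: "nat \<Rightarrow> ('a, 's) eff \<Rightarrow> bool" where
  "N_maximal n E \<longleftrightarrow>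
     (\<forall>f. lval n f \<longrightarrow> 1 - E {} (\<lambda>s. 1 - f s) \<le> E UNIV f)"

definition superadditive :: "nat \<Rightarrow> ('a, 's) eff \<Rightarrow> bool" where
  "superadditive n E \<longleftrightarrow>
     (\<forall>C1 C2 f g. lval n f \<longrightarrow> lval n g \<longrightarrow> C1 \<inter> C2 = {} \<longrightarrow>
        min (E C1 f) (E C2 g) \<le> E (C1 \<union> C2) (\<lambda>s. min (f s) (g s)))"

definition homogeneous :: "nat \<Rightarrow> ('a, 's) eff \<Rightarrow> bool" where
  "homogeneous n E \<longleftrightarrow>
     (\<forall>C f. lval n f \<longrightarrow>
        E C (\<lambda>s. loplus (f s) (f s)) = loplus (E C f) (E C f) \<and>
        E C (\<lambda>s. lodot (f s) (f s)) = lodot (E C f) (E C f))"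

definition liveness :: "('a, 's) eff \<Rightarrow> bool" where
  "liveness E \<longleftrightarrow> (\<forall>C. E C (\<lambda>s. 1) = 1)"

definition safety :: "('a, 's) eff \<Rightarrow> bool" where
  "safety E \<longleftrightarrow> (\<forall>C. E C (\<lambda>s. 0) = 0)"

definition principal :: "nat \<Rightarrow> ('a, 's) eff \<Rightarrow> bool" where
  "principal n E \<longleftrightarrow>
     (\<exists>g. lval n g \<and>
        {f. lval n f \<and> E {} f = 1} = {f. lval n f \<and> (\<forall>s. lpow n g s \<le> f s)})"

definition playable :: "nat \<Rightarrow> ('a, 's) eff \<Rightarrow> bool" where
  "playable n E \<longleftrightarrow> outcome_monotonic n E \<and> N_maximal n E \<and> superadditive n E \<and>
     homogeneous n E \<and> liveness E \<and> safety E"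

definition truly_playable :: "nat \<Rightarrow> ('a, 's) eff \<Rightarrow> bool" where
  "truly_playable n E \<longleftrightarrow> playable n E \<and> principal n E"

definition enriched_frame :: "nat \<Rightarrow> ('s \<Rightarrow> ('a, 's) eff) \<Rightarrow> ('s \<times> 's) set \<Rightarrow> bool" where
  "enriched_frame n E R \<longleftrightarrow> (\<forall>u. eff_fun n (E u))"

definition standard_frame :: "('s \<Rightarrow> ('a, 's) eff) \<Rightarrow> ('s \<times> 's) set \<Rightarrow> bool" where
  "standard_frame E R \<longleftrightarrow>
     R = {(u, v). E u {} (\<lambda>w. 1 - indicator {v} w) = 0}"

definition playable_frame :: "nat \<Rightarrow> ('s \<Rightarrow> ('a, 's) eff) \<Rightarrow> bool" where
  "playable_frame n E \<longleftrightarrow> (\<forall>u. playable n (E u))"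

definition truly_playable_frame :: "nat \<Rightarrow> ('s \<Rightarrow> ('a, 's) eff) \<Rightarrow> bool" where
  "truly_playable_frame n E \<longleftrightarrow> (\<forall>u. truly_playable n (E u))"

datatype 'a form =
    FOne
  | FProp nat
  | FImp "'a form" "'a form"
  | FNeg "'a form"
  | FBox "'a set" "'a form"
  | FBoxO "'a form"

definition FOdot :: "'a form \<Rightarrow> 'a form \<Rightarrow> 'a form" where
  "FOdot \<phi> \<psi> = FNeg (FImp \<phi> (FNeg \<psi>))"

definition FIff :: "'a form \<Rightarrow> 'a form \<Rightarrow> 'a form" where
  "FIff \<phi> \<psi> = FOdot (FImp \<phi> \<psi>) (FImp \<psi> \<phi>)"

primrec sem :: "('s \<Rightarrow> ('a, 's) eff) \<Rightarrow> ('s \<times> 's) set \<Rightarrow> ('s \<Rightarrow> nat \<Rightarrow> real)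
    \<Rightarrow> 's \<Rightarrow> 'a form \<Rightarrow> real" where
  "sem E R V u FOne = 1"
| "sem E R V u (FProp p) = V u p"
| "sem E R V u (FImp \<phi> \<psi>) = limp (sem E R V u \<phi>) (sem E R V u \<psi>)"
| "sem E R V u (FNeg \<phi>) = 1 - sem E R V u \<phi>"
| "sem E R V u (FBox C \<phi>) = E u C (\<lambda>v. sem E R V v \<phi>)"
| "sem E R V u (FBoxO \<phi>) =
     (if {v. (u, v) \<in> R} = {} then 1
      else Min ((\<lambda>v. sem E R V v \<phi>) ` {v. (u, v) \<in> R}))"

definition valid_in_frame :: "nat \<Rightarrow> ('s \<Rightarrow> ('a, 's) eff) \<Rightarrow> ('s \<times> 's) set \<Rightarrow> 'a form \<Rightarrow> bool" where
  "valid_in_frame n E R \<phi> \<longleftrightarrow>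
     (\<forall>V. (\<forall>u p. V u p \<in> Ln n) \<longrightarrow> (\<forall>u. sem E R V u \<phi> = 1))"

end

theory Submission
  imports Defs
begin


lemma Ln_iff: assumes "n \<ge> 1"
  shows "x \<in> Ln n \<longleftrightarrow> 0 \<le> x \<and> x \<le> 1 \<and> (\<exists>k::int. x = k / n)"
proof
  assume "x \<in> Ln n"
  then obtain k where k: "k \<le> n" "x = real k / real n" unfolding Ln_def by auto
  then show "0 \<le> x \<and> x \<le> 1 \<and> (\<exists>k::int. x = k / n)" using assms
    by (auto simp: divide_le_eq_1 intro!: exI[of _ "int k"])
next
  assume h: "0 \<le> x \<and> x \<le> 1 \<and> (\<exists>k::int. x = k / n)"
  then obtain k::int where k: "x = k / n" by auto
  have npos: "real n > 0" using assms by auto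
  have "k \<ge> 0" using h k npos by (auto simp: divide_simps)
  moreover have "k \<le> int n" using h k npos by (auto simp: divide_simps)
  ultimately show "x \<in> Ln n" unfolding Ln_def using k
    by (auto intro!: exI[of _ "nat k"])
qed

lemma Ln_bounds: "x \<in> Ln n \<Longrightarrow> 0 \<le> x \<and> x \<le> 1"
  unfolding Ln_def by (auto simp: divide_le_eq_1)

lemma Ln_finite: "finite (Ln n)"
proof -
  have "Ln n = (\<lambda>k. real k / real n) ` {..n}" unfolding Ln_def by auto
  then show ?thesis by simp
qed

lemma Ln_0: "n \<ge> 1 \<Longrightarrow> (0::real) \<in> Ln n" by (simp add: Ln_iff)
lemma Ln_1: "n \<ge> 1 \<Longrightarrow> (1::real) \<in> Ln n" by (simp add: Ln_iff) (rule exI[of _ "int n"], simp)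

lemma Ln_neg: assumes "n \<ge> 1" "x \<in> Ln n" shows "1 - x \<in> Ln n"
proof -
  obtain k::int where k: "x = k/n" using assms by (auto simp: Ln_iff)
  have "1 - x = (int n - k) / n" using assms(1) unfolding k by (simp add: field_simps)
  moreover have "0 \<le> x" "x \<le> 1" using Ln_bounds[OF assms(2)] by auto
  ultimately show ?thesis unfolding Ln_iff[OF assms(1)]
    by (intro conjI exI[of _ "int n - k"]) auto
qed

lemma Ln_limp: assumes "n \<ge> 1" "x \<in> Ln n" "y \<in> Ln n" shows "limp x y \<in> Ln n"
proof -
  obtain k::int where k: "x = k/n" using assms by (auto simp: Ln_iff)
  obtain j::int where j: "y = j/n" using assms by (auto simp: Ln_iff)
  have e: "1 - x + y = (int n - k + j) / n" using assms(1) unfolding k j by (simp add: field_simps)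
  show ?thesis
  proof (cases "1 - x + y \<le> 1")
    case True
    moreover have "0 \<le> x" "x \<le> 1" "0 \<le> y" "y \<le> 1" using Ln_bounds assms(2,3) by auto
    ultimately show ?thesis unfolding Ln_iff[OF assms(1)] limp_def
      by (intro conjI exI[of _ "int n - k + j"]) (use e in \<open>auto\<close>)
  next
    case False
    then show ?thesis using assms by (auto simp: limp_def Ln_1)
  qed
qed

lemma Ln_loplus: assumes "n \<ge> 1" "x \<in> Ln n" "y \<in> Ln n" shows "loplus x y \<in> Ln n"
proof -
  obtain k::int where k: "x = k/n" using assms by (auto simp: Ln_iff)
  obtain j::int where j: "y = j/n" using assms by (auto simp: Ln_iff)
  have e: "x + y = (k + j) / n" using assms(1) unfolding k j by (simp add: field_simps)
  show ?thesis
  proof (cases "x + y \<le> 1")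
    case True
    moreover have "0 \<le> x" "x \<le> 1" "0 \<le> y" "y \<le> 1" using Ln_bounds assms(2,3) by auto
    ultimately show ?thesis unfolding Ln_iff[OF assms(1)] loplus_def
      by (intro conjI exI[of _ "k + j"]) (use e in \<open>auto\<close>)
  next
    case False
    then show ?thesis using assms by (auto simp: loplus_def Ln_1)
  qed
qed

lemma Ln_lodot: assumes "n \<ge> 1" "x \<in> Ln n" "y \<in> Ln n" shows "lodot x y \<in> Ln n"
proof -
  obtain k::int where k: "x = k/n" using assms by (auto simp: Ln_iff)
  obtain j::int where j: "y = j/n" using assms by (auto simp: Ln_iff)
  have e: "x + y - 1 = (k + j - int n) / n" using assms(1) unfolding k j by (simp add: field_simps)
  show ?thesis
  proof (cases "x + y - 1 \<ge> 0")
    case True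
    moreover have "0 \<le> x" "x \<le> 1" "0 \<le> y" "y \<le> 1" using Ln_bounds assms(2,3) by auto
    ultimately show ?thesis unfolding Ln_iff[OF assms(1)] lodot_def
      by (intro conjI exI[of _ "k + j - int n"]) (use e in \<open>auto\<close>)
  next
    case False
    then show ?thesis using assms by (auto simp: lodot_def Ln_0)
  qed
qed

lemma lpow_formula: "0 \<le> x \<Longrightarrow> x \<le> 1 \<Longrightarrow> lpow k (\<lambda>_. x) s = max (real k * x - (real k - 1)) 0"
proof (induction k)
  case 0 then show ?case by simp
next
  case (Suc k)
  then show ?case by (auto simp: lodot_def max_def algebra_simps)
qed

lemma lpow_pt: "lpow k g s = lpow k (\<lambda>_. g s) s"
  by (induction k) auto

lemma lpow_Ln: assumes "n \<ge> 1" "g s \<in> Ln n" shows "lpow n g s = (if g s = 1 then 1 else 0)"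
proof -
  obtain k where k: "k \<le> n" "g s = real k / real n" using assms unfolding Ln_def by auto
  have b: "0 \<le> g s" "g s \<le> 1" using Ln_bounds[OF assms(2)] by auto
  have "lpow n g s = max (real n * g s - (real n - 1)) 0"
    by (subst lpow_pt) (rule lpow_formula[OF b])
  also have "real n * g s = real k" using k assms(1) by simp
  finally show ?thesis using k assms(1) by (auto simp: max_def)
qed

fun ap :: "bool list \<Rightarrow> real \<Rightarrow> real" where
  "ap [] x = x"
| "ap (b # w) x = ap w (if b then loplus x x else lodot x x)"

lemma ap_mono: "x \<le> y \<Longrightarrow> ap w x \<le> ap w y"
proof (induction w arbitrary: x y)
  case Nil then show ?case by simp
next
  case (Cons b w)
  show ?case unfolding ap.simps
    by (rule Cons.IH) (use Cons.prems in \<open>auto simp: loplus_def lodot_def\<close>)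
qed

lemma ap_Ln: "n \<ge> 1 \<Longrightarrow> x \<in> Ln n \<Longrightarrow> ap w x \<in> Ln n"
  by (induction w arbitrary: x) (auto simp: Ln_loplus Ln_lodot)

lemma ap_comm:
  assumes hom: "homogeneous n F" and n: "n \<ge> 1" and f: "lval n f"
  shows "F C (\<lambda>s. ap w (f s)) = ap w (F C f)"
  using f
proof (induction w arbitrary: f)
  case Nil then show ?case by simp
next
  case (Cons b w)
  define f' where "f' = (\<lambda>s. if b then loplus (f s) (f s) else lodot (f s) (f s))"
  have l: "lval n f'" using Cons.prems n unfolding f'_def lval_def by (auto simp: Ln_loplus Ln_lodot)
  have "F C (\<lambda>s. ap (b # w) (f s)) = F C (\<lambda>s. ap w (f' s))" by (simp add: f'_def)
  also have "\<dots> = ap w (F C f')" by (rule Cons.IH[OF l])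
  also have "F C f' = (if b then loplus (F C f) (F C f) else lodot (F C f) (F C f))"
    using hom Cons.prems unfolding homogeneous_def f'_def by (cases b) auto
  finally show ?case by simp
qed

lemma sep_one: "\<forall>x. 0 \<le> x \<longrightarrow> x \<le> 1 \<longrightarrow> 2^k * (1 - x) \<ge> (1::real) \<longrightarrow> (\<exists>w. ap w x = 0 \<and> ap w 1 = 1)"
proof (induction k)
  case 0 then show ?case by (auto intro!: exI[of _ "[]"])
next
  case (Suc k)
  show ?case
  proof (intro allI impI)
    fix x :: real assume h: "0 \<le> x" "x \<le> 1" "2 ^ Suc k * (1 - x) \<ge> 1"
    define x' where "x' = lodot x x"
    have "0 \<le> x'" "x' \<le> 1" using h by (auto simp: x'_def lodot_def)
    moreover have "2^k * (1 - x') \<ge> 1"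
    proof (cases "2*x - 1 \<ge> 0")
      case True
      then have "1 - x' = 2 * (1 - x)" by (simp add: x'_def lodot_def)
      then have "2^k * (1 - x') = 2^Suc k * (1 - x)" by simp
      then show ?thesis using h(3) by linarith
    next
      case False
      then have "x' = 0" by (simp add: x'_def lodot_def)
      then show ?thesis by simp
    qed
    ultimately obtain w where "ap w x' = 0" "ap w 1 = 1" using Suc.IH by blast
    then show "\<exists>w. ap w x = 0 \<and> ap w 1 = 1"
      by (intro exI[of _ "False # w"]) (simp add: x'_def lodot_def)
  qed
qed

lemma sep_main: "\<forall>x y. 0 \<le> x \<longrightarrow> x < y \<longrightarrow> y \<le> 1 \<longrightarrow> 2^k * (y - x) \<ge> (1::real) \<longrightarrow> (\<exists>w. ap w x = 0 \<and> ap w y = 1)"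
proof (induction k)
  case 0 then show ?case by (auto intro!: exI[of _ "[]"])
next
  case (Suc k)
  show ?case
  proof (intro allI impI)
    fix x y :: real assume h: "0 \<le> x" "x < y" "y \<le> 1" "2 ^ Suc k * (y - x) \<ge> 1"
    show "\<exists>w. ap w x = 0 \<and> ap w y = 1"
    proof (cases "y \<le> 1/2")
      case True
      have "2^k * (2*y - 2*x) \<ge> 1" using h(4) by (simp add: algebra_simps)
      moreover have "0 \<le> 2*x" "2*x < 2*y" "2*y \<le> 1" using True h by auto
      ultimately obtain w where w: "ap w (2*x) = 0" "ap w (2*y) = 1" using Suc.IH by blast
      then show ?thesis using True h
        by (intro exI[of _ "True # w"]) (simp add: loplus_def)
    next
      case F1: False
      show ?thesis
      proof (cases "x \<ge> 1/2")
        case True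
        have "2^k * ((2*y-1) - (2*x-1)) \<ge> 1" using h(4) by (simp add: algebra_simps)
        moreover have "0 \<le> 2*x-1" "2*x-1 < 2*y-1" "2*y-1 \<le> 1" using True h by auto
        ultimately obtain w where w: "ap w (2*x-1) = 0" "ap w (2*y-1) = 1" using Suc.IH by blast
        then show ?thesis using True h
          by (intro exI[of _ "False # w"]) (simp add: lodot_def)
      next
        case False
        obtain m where m: "1 / (1 - 2*x) < 2^m" using real_arch_pow[of "2::real"] by auto
        have "1 - 2*x > 0" using False by auto
        then have "2^m * (1 - 2*x) \<ge> 1" using m by (simp add: divide_simps)
        moreover have "0 \<le> 2*x" "2*x \<le> 1" using h False by auto
        ultimately obtain w where w: "ap w (2*x) = 0" "ap w 1 = 1" using sep_one[of m] by blast
        then show ?thesis using False F1 h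
          by (intro exI[of _ "True # w"]) (simp add: loplus_def)
      qed
    qed
  qed
qed

lemma sep: assumes "0 \<le> x" "x < y" "y \<le> (1::real)" shows "\<exists>w. ap w x = 0 \<and> ap w y = 1"
proof -
  obtain m where m: "1 / (y - x) < 2^m" using real_arch_pow[of "2::real"] by auto
  then have "2^m * (y - x) \<ge> 1" using assms by (simp add: divide_simps)
  then show ?thesis using sep_main[of m] assms by auto
qed



lemma sem_Ln:
  assumes n: "n \<ge> 1" and fr: "enriched_frame n E R" and V: "\<forall>u p. V u p \<in> Ln n"
  shows "sem E R V u \<phi> \<in> Ln n"
proof (induction \<phi> arbitrary: u)
  case FOne then show ?case using n by (simp add: Ln_1)
next
  case (FProp p) then show ?case using V by simp
next
  case (FImp a b) then show ?case using n by (simp add: Ln_limp)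
next
  case (FNeg a) then show ?case using n by (simp add: Ln_neg)
next
  case (FBox C a)
  have "lval n (\<lambda>v. sem E R V v a)" using FBox unfolding lval_def by auto
  then show ?case using fr unfolding enriched_frame_def eff_fun_def by simp
next
  case (FBoxO a)
  let ?S = "(\<lambda>v. sem E R V v a) ` {v. (u, v) \<in> R}"
  have sub: "?S \<subseteq> Ln n" using FBoxO by auto
  have fin: "finite ?S" using finite_subset[OF sub Ln_finite] .
  show ?case
  proof (cases "{v. (u, v) \<in> R} = {}")
    case True then show ?thesis using n by (simp add: Ln_1)
  next
    case False
    then have "Min ?S \<in> ?S" using fin by (intro Min_in) auto
    then show ?thesis using sub False by auto
  qed
qed

lemma iff_sem: "sem E R V u (FIff a b) = 1 \<longleftrightarrow> sem E R V u a = sem E R V u b"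
  unfolding FIff_def FOdot_def by (auto simp: limp_def min_def)



lemma dir1:
  fixes E :: "'s \<Rightarrow> 'a set \<Rightarrow> ('s \<Rightarrow> real) \<Rightarrow> real"
  assumes n: "n \<ge> 1" and fr: "enriched_frame n E R" and st: "standard_frame E R"
    and tp: "truly_playable n (E u)"
    and V: "\<forall>u p. V u p \<in> Ln n"
  shows "sem E R V u (FIff (FBox {} \<phi>) (FBoxO \<phi>)) = 1"
proof -
  define f where "f = (\<lambda>v. sem E R V v \<phi>)"
  have lf: "lval n f" unfolding lval_def f_def using sem_Ln[OF n fr V] by auto
  have hom: "homogeneous n (E u)" using tp unfolding truly_playable_def playable_def by auto
  have ef: "eff_fun n (E u)" using fr unfolding enriched_frame_def by auto
  obtain g where g: "lval n g"
    and geq: "{f. lval n f \<and> E u {} f = 1} = {f. lval n f \<and> (\<forall>s. lpow n g s \<le> f s)}"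
    using tp unfolding truly_playable_def principal_def by auto
  define Y where "Y = {s. g s = 1}"
  have key: "E u {} h = 1 \<longleftrightarrow> (\<forall>s\<in>Y. h s = 1)" if lh: "lval n h" for h
  proof -
    have "E u {} h = 1 \<longleftrightarrow> (\<forall>s. lpow n g s \<le> h s)" using geq lh by blast
    also have "\<dots> \<longleftrightarrow> (\<forall>s\<in>Y. h s = 1)"
    proof -
      have "lpow n g s \<le> h s \<longleftrightarrow> (s \<in> Y \<longrightarrow> h s = 1)" for s
        using lpow_Ln[OF n, of g s] g lh Ln_bounds[of "h s" n]
        unfolding lval_def Y_def by auto
      then show ?thesis by auto
    qed
    finally show ?thesis .
  qed
  have RYv: "(u, v) \<in> R \<longleftrightarrow> v \<in> Y" for v
  proof
    define h where "h = (\<lambda>w. 1 - indicator {v} w :: real)"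
    have lh: "lval n h" unfolding lval_def h_def using n by (auto simp: indicator_def Ln_0 Ln_1)
    have R: "(u, v) \<in> R \<longleftrightarrow> E u {} h = 0" using st unfolding standard_frame_def h_def by auto
    {
      assume "(u, v) \<in> R"
      then have "E u {} h = 0" using R by auto
      then have "E u {} h \<noteq> 1" by auto
      then obtain s where "s \<in> Y" "h s \<noteq> 1" using key[OF lh] by auto
      then show "v \<in> Y" unfolding h_def by (auto simp: indicator_def split: if_splits)
    }
    {
      assume vY: "v \<in> Y"
      have "E u {} h \<noteq> 1" using key[OF lh] vY unfolding h_def by auto
      moreover have "(\<lambda>s. lodot (h s) (h s)) = h" unfolding h_def
        by (auto simp: lodot_def indicator_def)
      then have "E u {} h = lodot (E u {} h) (E u {} h)"
        using hom lh unfolding homogeneous_def by metis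
      ultimately have "E u {} h = 0" by (auto simp: lodot_def max_def split: if_splits)
      then show "(u, v) \<in> R" using R by auto
    }
  qed
  have RY: "{v. (u, v) \<in> R} = Y" using RYv by auto
  have "E u {} f = (if Y = {} then 1 else Min (f ` Y))"
  proof (cases "Y = {}")
    case True then show ?thesis using key[OF lf] by auto
  next
    case False
    let ?m = "Min (f ` Y)"
    have sub: "f ` Y \<subseteq> Ln n" using lf unfolding lval_def by auto
    have fin: "finite (f ` Y)" using finite_subset[OF sub Ln_finite] .
    have mY: "?m \<in> f ` Y" using fin False by (intro Min_in) auto
    have mle: "\<And>s. s \<in> Y \<Longrightarrow> ?m \<le> f s" using fin by auto
    have mb: "0 \<le> ?m" "?m \<le> 1" using mY sub Ln_bounds by auto
    define e where "e = E u {} f"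
    have eb: "0 \<le> e" "e \<le> 1" using ef lf Ln_bounds unfolding eff_fun_def e_def by blast+
    have fb: "\<And>s. 0 \<le> f s \<and> f s \<le> 1" using lf Ln_bounds unfolding lval_def by blast
    have lw: "lval n (\<lambda>s. ap w (f s))" for w using lf ap_Ln[OF n] unfolding lval_def by auto
    have ew: "E u {} (\<lambda>s. ap w (f s)) = ap w e" for w using ap_comm[OF hom n lf] e_def by auto
    have apb: "ap w x \<le> 1" if "x \<in> Ln n" for w x using ap_Ln[OF n that] Ln_bounds by blast
    have "\<not> e < ?m"
    proof
      assume "e < ?m"
      then obtain w where w: "ap w e = 0" "ap w ?m = 1" using sep eb mb by blast
      have "\<forall>s\<in>Y. ap w (f s) = 1"
      proof
        fix s assume "s \<in> Y"
        then have "ap w ?m \<le> ap w (f s)" using mle ap_mono by blast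
        moreover have "ap w (f s) \<le> 1" using apb lf unfolding lval_def by blast
        ultimately show "ap w (f s) = 1" using w by auto
      qed
      then have "ap w e = 1" using key[OF lw] ew by auto
      then show False using w by auto
    qed
    moreover have "\<not> ?m < e"
    proof
      assume "?m < e"
      then obtain w where w: "ap w ?m = 0" "ap w e = 1" using sep eb mb by blast
      then have "\<forall>s\<in>Y. ap w (f s) = 1" using key[OF lw] ew by auto
      then show False using mY w by auto
    qed
    ultimately show ?thesis using False e_def by auto
  qed
  then show ?thesis unfolding iff_sem using RY by (simp add: f_def)
qed

lemma dir2:
  fixes E :: "'s \<Rightarrow> 'a set \<Rightarrow> ('s \<Rightarrow> real) \<Rightarrow> real"
  assumes n: "n \<ge> 1"
    and val: "\<forall>\<phi>. valid_in_frame n E R (FIff (FBox {} \<phi>) (FBoxO \<phi>))"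
  shows "principal n (E u)"
proof -
  define RU where "RU = {v. (u, v) \<in> R}"
  define g where "g = (\<lambda>s. indicator RU s :: real)"
  have lg: "lval n g" unfolding lval_def g_def using n by (auto simp: indicator_def Ln_0 Ln_1)
  have lp: "lpow n g s = g s" for s using lpow_Ln[OF n, of g s] lg unfolding lval_def g_def
    by (auto simp: indicator_def)
  have "E u {} f = 1 \<longleftrightarrow> (\<forall>s. lpow n g s \<le> f s)" if lf: "lval n f" for f
  proof -
    define V where "V = (\<lambda>v (p::nat). f v)"
    have VL: "\<forall>u p. V u p \<in> Ln n" using lf unfolding V_def lval_def by auto
    have "sem E R V u (FIff (FBox {} (FProp 0)) (FBoxO (FProp 0))) = 1"
      using val VL unfolding valid_in_frame_def by blast
    then have eq: "E u {} f = (if RU = {} then 1 else Min (f ` RU))"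
      unfolding iff_sem by (simp add: V_def RU_def)
    have fb: "\<And>s. 0 \<le> f s \<and> f s \<le> 1" using lf Ln_bounds unfolding lval_def by blast
    show ?thesis
    proof (cases "RU = {}")
      case True
      then have "\<forall>s. lpow n g s = 0" using lp by (simp add: g_def)
      then show ?thesis using eq fb True by simp
    next
      case False
      have sub: "f ` RU \<subseteq> Ln n" using lf unfolding lval_def by auto
      have fin: "finite (f ` RU)" using finite_subset[OF sub Ln_finite] .
      have mY: "Min (f ` RU) \<in> f ` RU" using fin False by (intro Min_in) auto
      have "Min (f ` RU) = 1 \<longleftrightarrow> 1 \<le> Min (f ` RU)" 
      proof -
        obtain s where "Min (f ` RU) = f s" using mY by auto
        then show ?thesis using fb[of s] by auto
      qed
      also have "\<dots> \<longleftrightarrow> (\<forall>s\<in>RU. 1 \<le> f s)" using fin False by (auto simp: Min_ge_iff)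
      also have "\<dots> \<longleftrightarrow> (\<forall>s. lpow n g s \<le> f s)" 
      proof -
        have lp': "lpow n g s = (if s \<in> RU then 1 else 0)" for s using lp[of s] by (simp add: g_def indicator_def)
        show ?thesis using fb by (auto simp only: lp') (auto split: if_splits)
      qed
      finally show ?thesis using eq False by simp
    qed
  qed
  then show ?thesis unfolding principal_def using lg by (intro exI[of _ g]) auto
qed

theorem mainTheorem14:
  fixes n :: nat
    and E :: "'s \<Rightarrow> ('a::finite) set \<Rightarrow> ('s \<Rightarrow> real) \<Rightarrow> real"
    and R :: "('s \<times> 's) set"
  assumes "n \<ge> 1"
    and "card (UNIV :: 'a set) \<ge> 2"
    and "enriched_frame n E R"
    and "standard_frame E R"
    and "playable_frame n E"
  shows "truly_playable_frame n E \<longleftrightarrow>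
           (\<forall>\<phi>. valid_in_frame n E R (FIff (FBox {} \<phi>) (FBoxO \<phi>)))"
proof
  assume tp: "truly_playable_frame n E"
  show "\<forall>\<phi>. valid_in_frame n E R (FIff (FBox {} \<phi>) (FBoxO \<phi>))"
    unfolding valid_in_frame_def
    using dir1[OF assms(1) assms(3) assms(4)] tp unfolding truly_playable_frame_def by blast
next
  assume v: "\<forall>\<phi>. valid_in_frame n E R (FIff (FBox {} \<phi>) (FBoxO \<phi>))"
  show "truly_playable_frame n E"
    unfolding truly_playable_frame_def truly_playable_def
    using dir2[OF assms(1) v] assms(5) unfolding playable_frame_def by blast
qed


end
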